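(* Let $(S,* )$ be a finite cycle set of class $d$ and let $k$ be a positive integer with $k<d$. Then the cycle set $(S^{[k]},\star)$ has class $d/\gcd(d,k)$. Moreover, $(S^{[d+1]},\star)$ coincides with $(S,* )$ as a cycle set, i.e. $\psi_{d+1}(s)(t)=s*t$ for all $s,t\in S$.
   Context: A cycle set is a set $S$ with a binary operation $*$ such that each $t\mapsto s*t$ is bijective and $(s*t)*(s*u)=(t*s)*(t*u)$ for all $s,t,u$. Write $S=\{s_1,\dots,s_n\}$, let $\psi(s)\in\mathfrak S_n$ satisfy $s_i*s_j=s_{\psi(s_i)(j)}$, $T(s)=s*s$, and $\psi_k(s)=\psi(T^{k-1}(s))\circ\cdots\circ\psi(T(s))\circ\psi(s)$. The class of a finite cycle set is the least integer $d\ge1$ with $\psi_d(s)=\mathrm{id}$ for all $s$. Let $M=\langle S\mid s(s*t)=t(t*s)\rangle^+$ be the structure monoid and $s^{[k]}=s\,T(s)\cdots T^{k-1}(s)\in M$. For $k\ge1$, $S^{[k]}=\{s^{[k]}:s\in S\}$ with $s^{[k]}\star t^{[k]}=(\psi_k(s)(t))^{[k]}$ is a cycle set (identified with $S$ via $s\mapsto s^{[k]}$). *)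

theory Defs
  imports Main
begin

definition cycle_set :: "'a set \<Rightarrow> ('a \<Rightarrow> 'a \<Rightarrow> 'a) \<Rightarrow> bool" where
  "cycle_set S op \<longleftrightarrow>
     (\<forall>s\<in>S. bij_betw (op s) S S) \<and>
     (\<forall>s\<in>S. \<forall>t\<in>S. \<forall>u\<in>S. op (op s t) (op s u) = op (op t s) (op t u))"

text \<open>psi(s) is the map t |-> s*t; T(s) = s*s.\<close>
definition cs_T :: "('a \<Rightarrow> 'a \<Rightarrow> 'a) \<Rightarrow> 'a \<Rightarrow> 'a" where
  "cs_T op s = op s s"

text \<open>psi_k(s) = psi(T^(k-1) s) o ... o psi(T s) o psi(s), so psi_0 = id and
  psi_(k+1)(s) = psi_k(T s) o psi(s).\<close>
fun psik :: "('a \<Rightarrow> 'a \<Rightarrow> 'a) \<Rightarrow> nat \<Rightarrow> 'a \<Rightarrow> 'a \<Rightarrow> 'a" where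
  "psik op 0 s = id"
| "psik op (Suc k) s = psik op k (cs_T op s) \<circ> op s"

definition has_class :: "'a set \<Rightarrow> ('a \<Rightarrow> 'a \<Rightarrow> 'a) \<Rightarrow> nat \<Rightarrow> bool" where
  "has_class S op d \<longleftrightarrow>
     1 \<le> d \<and> (\<forall>s\<in>S. \<forall>t\<in>S. psik op d s t = t) \<and>
     (\<forall>d'. 1 \<le> d' \<and> d' < d \<longrightarrow> \<not> (\<forall>s\<in>S. \<forall>t\<in>S. psik op d' s t = t))"

text \<open>The cycle set S^[k], identified with S via s |-> s^[k]: s \<star> t = psi_k(s)(t).\<close>
definition power_cs :: "('a \<Rightarrow> 'a \<Rightarrow> 'a) \<Rightarrow> nat \<Rightarrow> 'a \<Rightarrow> 'a \<Rightarrow> 'a" where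
  "power_cs op k s t = psik op k s t"

end

theory Submission
  imports Defs
begin

lemma psik_add: "psik op (a+b) s = psik op b ((cs_T op ^^ a) s) \<circ> psik op a s"
  by (induction a arbitrary: s) (auto simp: funpow_swap1)

lemma psik_diag: "psik op k s s = (cs_T op ^^ k) s"
proof (induction k arbitrary: s)
  case (Suc k)
  have "psik op (Suc k) s s = psik op k (cs_T op s) (cs_T op s)" by (simp add: cs_T_def)
  then show ?case using Suc by (simp add: funpow_swap1)
qed simp

lemma psik_power: "psik (power_cs op k) m s = psik op (k*m) s"
proof (induction m arbitrary: s)
  case 0 then show ?case by simp
next
  case (Suc m)
  have T: "cs_T (power_cs op k) s = (cs_T op ^^ k) s"
    by (simp add: cs_T_def power_cs_def psik_diag)
  have "psik (power_cs op k) (Suc m) s = psik op (k*m) ((cs_T op ^^ k) s) \<circ> psik op k s"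
    using Suc T by (simp add: power_cs_def[abs_def])
  also have "\<dots> = psik op (k + k*m) s" by (simp add: psik_add)
  finally show ?case by simp
qed

locale cl =
  fixes S and op :: "'a \<Rightarrow> 'a \<Rightarrow> 'a"
  assumes cl: "\<And>s t. s \<in> S \<Longrightarrow> t \<in> S \<Longrightarrow> op s t \<in> S"
begin

lemma T_in: "s \<in> S \<Longrightarrow> (cs_T op ^^ n) s \<in> S"
  by (induction n) (auto simp: cs_T_def cl)

lemma psik_in: "s \<in> S \<Longrightarrow> t \<in> S \<Longrightarrow> psik op n s t \<in> S"
  by (induction n arbitrary: s t) (auto simp: cs_T_def cl)

definition P where "P n \<longleftrightarrow> (\<forall>s\<in>S. \<forall>t\<in>S. psik op n s t = t)"

lemma periodic:
  assumes "P d" "s \<in> S" "t \<in> S"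
  shows "psik op j ((cs_T op ^^ d) s) t = psik op j s t"
proof -
  have "psik op (d+j) s t = psik op j ((cs_T op ^^ d) s) t"
    using assms by (simp add: psik_add P_def)
  moreover have "psik op (j+d) s t = psik op j s t"
    using assms by (simp add: psik_add P_def T_in psik_in)
  ultimately show ?thesis by (simp add: add.commute)
qed

lemma periodic_q:
  assumes "P d" "s \<in> S" "t \<in> S"
  shows "psik op j ((cs_T op ^^ (q*d)) s) t = psik op j s t"
proof (induction q)
  case 0 then show ?case by simp
next
  case (Suc q)
  have "(cs_T op ^^ (Suc q * d)) s = (cs_T op ^^ d) ((cs_T op ^^ (q*d)) s)"
    by (simp add: funpow_add)
  then show ?case using periodic[OF assms(1) T_in[OF assms(2)] assms(3)] Suc by simp
qed

lemma P_mult: assumes "P d" shows "P (q*d)"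
proof (induction q)
  case 0 then show ?case by (simp add: P_def)
next
  case (Suc q)
  show ?case unfolding P_def
  proof (intro ballI)
    fix s t assume st: "s \<in> S" "t \<in> S"
    have "psik op (d + q*d) s t = psik op (q*d) ((cs_T op ^^ d) s) (psik op d s t)"
      by (simp add: psik_add)
    also have "\<dots> = t" using Suc assms st T_in unfolding P_def by simp
    finally show "psik op (Suc q * d) s t = t" by simp
  qed
qed

lemma P_dvd:
  assumes "P d" "1 \<le> d" "\<forall>d'. 1 \<le> d' \<and> d' < d \<longrightarrow> \<not> P d'" "P n"
  shows "d dvd n"
proof -
  define q r where "q = n div d" and "r = n mod d"
  have n: "n = q*d + r" by (simp add: q_def r_def)
  have "r < d" using assms(2) by (simp add: r_def)
  have "P r" unfolding P_def
  proof (intro ballI)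
    fix s t assume st: "s \<in> S" "t \<in> S"
    have "psik op n s t = psik op r ((cs_T op ^^ (q*d)) s) (psik op (q*d) s t)"
      using n by (simp add: psik_add)
    also have "\<dots> = psik op r ((cs_T op ^^ (q*d)) s) t"
      using P_mult[OF assms(1)] st unfolding P_def by simp
    also have "\<dots> = psik op r s t" using periodic_q[OF assms(1) st] .
    finally show "psik op r s t = t" using assms(4) st unfolding P_def by simp
  qed
  then have "r = 0" using assms(3) \<open>r < d\<close> by (metis less_one not_less)
  then show ?thesis by (simp add: r_def mod_eq_0_iff_dvd)
qed

end

lemma div_gcd_dvd:
  fixes d k m :: nat
  assumes "d dvd k * m" "d \<ge> 1"
  shows "d div gcd d k dvd m"
proof -
  have g: "gcd d k > 0" using assms by simp
  have "coprime (d div gcd d k) (k div gcd d k)" using g by (simp add: div_gcd_coprime)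
  moreover have "d div gcd d k dvd (k div gcd d k) * m"
  proof -
    obtain c where c: "k * m = d * c" using assms(1) by blast
    have "(k div gcd d k) * m * gcd d k = (d div gcd d k) * c * gcd d k"
      using c by (simp add: algebra_simps)
    then have "(k div gcd d k) * m = (d div gcd d k) * c" using g by (metis mult_right_cancel not_gr0)
    then show ?thesis by simp
  qed
  ultimately show ?thesis using coprime_dvd_mult_right_iff by blast
qed

theorem mainTheorem10:
  fixes S :: "'a set" and op :: "'a \<Rightarrow> 'a \<Rightarrow> 'a" and d k :: nat
  assumes "finite S" and "cycle_set S op" and "has_class S op d"
    and "1 \<le> k" and "k < d"
  shows "has_class S (power_cs op k) (d div gcd d k) \<and>
         (\<forall>s\<in>S. \<forall>t\<in>S. power_cs op (d + 1) s t = op s t)"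
proof -
  interpret cl S op
    using assms(2) unfolding cycle_set_def by unfold_locales (auto dest: bij_betwE)
  have Pd: "P d" "1 \<le> d" "\<forall>d'. 1 \<le> d' \<and> d' < d \<longrightarrow> \<not> P d'"
    using assms(3) unfolding has_class_def P_def by auto
  define m where "m = d div gcd d k"
  have g: "gcd d k dvd d" "gcd d k dvd k" "gcd d k > 0" using Pd by auto
  have m1: "1 \<le> m" unfolding m_def using g(1,3) Pd(2)
    using div_greater_zero_iff[of d "gcd d k"] dvd_imp_le[of "gcd d k" d] by simp
  have km: "k * m = (k div gcd d k) * d"
    unfolding m_def using g by (metis dvd_div_mult dvd_mult_div_cancel mult.commute div_mult_swap)
  have A: "\<forall>s\<in>S. \<forall>t\<in>S. psik (power_cs op k) m s t = t"
    using P_mult[OF Pd(1), of "k div gcd d k"] km by (simp add: psik_power P_def)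
  have B: "\<not> (\<forall>s\<in>S. \<forall>t\<in>S. psik (power_cs op k) m' s t = t)" if "1 \<le> m'" "m' < m" for m'
  proof
    assume "\<forall>s\<in>S. \<forall>t\<in>S. psik (power_cs op k) m' s t = t"
    then have "P (k*m')" by (simp add: psik_power P_def)
    then have "d dvd k*m'" using P_dvd[OF Pd] by blast
    then have "m dvd m'" unfolding m_def using div_gcd_dvd Pd(2) by blast
    then show False using that by (simp add: dvd_imp_le leD)
  qed
  have C: "\<forall>s\<in>S. \<forall>t\<in>S. power_cs op (d + 1) s t = op s t"
  proof (intro ballI)
    fix s t assume st: "s \<in> S" "t \<in> S"
    have "psik op (1 + d) s t = psik op d (cs_T op s) (op s t)"
      by (simp add: psik_add)
    also have "\<dots> = op s t" using Pd(1) st T_in[of s 1] cl unfolding P_def by simp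
    finally show "power_cs op (d + 1) s t = op s t" by (simp add: power_cs_def add.commute)
  qed
  show ?thesis using A B C m1 unfolding has_class_def m_def by blast
qed

end
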